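(* Assume $\sup_{t\in\mathbb R}\int_H\|x\|\,\nu_t(dx)<\infty$. Then for every $u\in K$ and every fixed $x\in H$, $$\lim_{\tau\to\infty}\sup_{t\in\mathbb R}\big|P_\tau u(t,x)-\overline u_{t+\tau}\big|=0,\qquad\text{where }\overline u_t:=\int_Hu(t,y)\,\nu_t(dy).$$
   Context: Setting: $H$ real separable Hilbert space; $L$ an $H$-valued Lévy process with Lévy measure $M$ satisfying $\int_{\|x\|>1}\|x\|M(dx)<\infty$; $f$, $B$, $A(t)$ $T$-periodic coefficients ($f$ continuous, $B$ strongly continuous and norm bounded, $A(t)$ with common domain) with evolution family $U(t,s)$, $\|U(t,s)\|\le ce^{-\omega(t-s)}$ ($c,\omega>0$); the adjoints $A^*(t)$ have a common dense domain $D(A^* )$ with $U(t,s)^*D(A^* )\subset D(A^* )$ and $\frac d{dt}U(t,s)^*y=U(t,s)^*A^*(t)y$. $X(t,s,x)=U(t,s)x+\int_s^tU(t,r)f(r)dr+\int_s^tU(t,r)B(r)dL_r$, $P(s,t)\varphi(x)=\mathbb E\varphi(X(t,s,x))$, $P_\tau u(t,x):=(P(t,t+\tau)u(t+\tau,\cdot))(x)$. $(\nu_t)_{t\in\mathbb R}$ is the unique $T$-periodic evolution system of measures (Borel probability measures with $\int P(s,t)\varphi\,d\nu_s=\int\varphi\,d\nu_t$ for $s<t$). $K$: real parts of the complex span of $(t,x)\mapsto\Phi(t)e^{i\langle x,h(t)\rangle}$, $\Phi\in C^1(\mathbb R,\mathbb R)$ and $h\in C^1(\mathbb R,H)$ $T$-periodic,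 $h$ with values in $D(A^* )$. *)

theory Defs
  imports "HOL-Probability.Probability"
begin

text \<open>A real separable Hilbert space is modelled by a type of sort
  real_inner, complete_space, second_countable_topology (separable metric = second countable).\<close>

definition increments_indep ::
  "'w measure \<Rightarrow> (real \<Rightarrow> 'w \<Rightarrow> 'h::{real_inner, complete_space, second_countable_topology}) \<Rightarrow> bool" where
  "increments_indep \<Omega> L \<longleftrightarrow>
     (\<forall>(ts::nat \<Rightarrow> real) n. strict_mono ts \<longrightarrow>
        prob_space.indep_vars \<Omega> (\<lambda>_. borel) (\<lambda>i \<omega>. L (ts (Suc i)) \<omega> - L (ts i) \<omega>) {..<n})"

definition levy_process ::
  "'w measure \<Rightarrow> (real \<Rightarrow> 'w \<Rightarrow> 'h::{real_inner, complete_space, second_countable_topology}) \<Rightarrow> bool" where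
  "levy_process \<Omega> L \<longleftrightarrow>
     prob_space \<Omega>
   \<and> (\<forall>t. L t \<in> borel_measurable \<Omega>)
   \<and> (\<forall>\<omega>\<in>space \<Omega>. L 0 \<omega> = 0)
   \<and> increments_indep \<Omega> L
   \<and> (\<forall>s t. s \<le> t \<longrightarrow>
        distr \<Omega> borel (\<lambda>\<omega>. L t \<omega> - L s \<omega>) = distr \<Omega> borel (\<lambda>\<omega>. L (t - s) \<omega> - L 0 \<omega>))
   \<and> (\<forall>\<omega>\<in>space \<Omega>. \<forall>t. continuous (at_right t) (\<lambda>r. L r \<omega>)
                         \<and> (\<exists>l. ((\<lambda>r. L r \<omega>) \<longlongrightarrow> l) (at_left t)))"

definition jump :: "(real \<Rightarrow> 'w \<Rightarrow> 'h::real_normed_vector) \<Rightarrow> 'w \<Rightarrow> real \<Rightarrow> 'h" where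
  "jump L \<omega> s = L s \<omega> - Lim (at_left s) (\<lambda>r. L r \<omega>)"

definition levy_measure ::
  "'w measure \<Rightarrow> (real \<Rightarrow> 'w \<Rightarrow> 'h::{real_inner, complete_space, second_countable_topology}) \<Rightarrow> 'h measure" where
  "levy_measure \<Omega> L = measure_of UNIV (sets borel)
     (\<lambda>A. \<integral>\<^sup>+\<omega>. emeasure (count_space UNIV) {s\<in>{0<..1}. jump L \<omega> s \<in> A - {0}} \<partial>\<Omega>)"

definition riemann_sum ::
  "(real \<Rightarrow> 'w \<Rightarrow> 'h::real_normed_vector) \<Rightarrow> (real \<Rightarrow> 'h \<Rightarrow>\<^sub>L 'h) \<Rightarrow> real \<Rightarrow> real \<Rightarrow> nat \<Rightarrow> 'w \<Rightarrow> 'h" where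
  "riemann_sum L G s t n \<omega> =
     (\<Sum>k<n. G (s + real k * (t - s) / real n)
               (L (s + real (Suc k) * (t - s) / real n) \<omega> - L (s + real k * (t - s) / real n) \<omega>))"

definition stoch_int ::
  "'w measure \<Rightarrow> (real \<Rightarrow> 'w \<Rightarrow> 'h::{real_inner, complete_space, second_countable_topology})
     \<Rightarrow> (real \<Rightarrow> 'h \<Rightarrow>\<^sub>L 'h) \<Rightarrow> real \<Rightarrow> real \<Rightarrow> 'w \<Rightarrow> 'h" where
  "stoch_int \<Omega> L G s t = (SOME I. I \<in> borel_measurable \<Omega> \<and>
      (\<forall>e>0. (\<lambda>n. measure \<Omega> {\<omega>\<in>space \<Omega>. norm (riemann_sum L G s t n \<omega> - I \<omega>) > e})
               \<longlonglongrightarrow> 0))"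

definition OU_proc ::
  "'w measure \<Rightarrow> (real \<Rightarrow> 'w \<Rightarrow> 'h::{real_inner, complete_space, second_countable_topology})
    \<Rightarrow> (real \<Rightarrow> real \<Rightarrow> 'h \<Rightarrow>\<^sub>L 'h) \<Rightarrow> (real \<Rightarrow> 'h) \<Rightarrow> (real \<Rightarrow> 'h \<Rightarrow>\<^sub>L 'h)
    \<Rightarrow> real \<Rightarrow> real \<Rightarrow> 'h \<Rightarrow> 'w \<Rightarrow> 'h" where
  "OU_proc \<Omega> L U f B t s x \<omega> =
     U t s x + integral {s..t} (\<lambda>r. U t r (f r)) + stoch_int \<Omega> L (\<lambda>r. U t r o\<^sub>L B r) s t \<omega>"

definition trans_op ::
  "'w measure \<Rightarrow> (real \<Rightarrow> 'w \<Rightarrow> 'h::{real_inner, complete_space, second_countable_topology})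
    \<Rightarrow> (real \<Rightarrow> real \<Rightarrow> 'h \<Rightarrow>\<^sub>L 'h) \<Rightarrow> (real \<Rightarrow> 'h) \<Rightarrow> (real \<Rightarrow> 'h \<Rightarrow>\<^sub>L 'h)
    \<Rightarrow> real \<Rightarrow> real \<Rightarrow> ('h \<Rightarrow> real) \<Rightarrow> 'h \<Rightarrow> real" where
  "trans_op \<Omega> L U f B s t \<phi> x = (\<integral>\<omega>. \<phi> (OU_proc \<Omega> L U f B t s x \<omega>) \<partial>\<Omega>)"

definition P_tau ::
  "'w measure \<Rightarrow> (real \<Rightarrow> 'w \<Rightarrow> 'h::{real_inner, complete_space, second_countable_topology})
    \<Rightarrow> (real \<Rightarrow> real \<Rightarrow> 'h \<Rightarrow>\<^sub>L 'h) \<Rightarrow> (real \<Rightarrow> 'h) \<Rightarrow> (real \<Rightarrow> 'h \<Rightarrow>\<^sub>L 'h)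
    \<Rightarrow> real \<Rightarrow> (real \<Rightarrow> 'h \<Rightarrow> real) \<Rightarrow> real \<Rightarrow> 'h \<Rightarrow> real" where
  "P_tau \<Omega> L U f B \<tau> u t x = trans_op \<Omega> L U f B t (t + \<tau>) (u (t + \<tau>)) x"

definition evolution_system_of_measures ::
  "'w measure \<Rightarrow> (real \<Rightarrow> 'w \<Rightarrow> 'h::{real_inner, complete_space, second_countable_topology})
    \<Rightarrow> (real \<Rightarrow> real \<Rightarrow> 'h \<Rightarrow>\<^sub>L 'h) \<Rightarrow> (real \<Rightarrow> 'h) \<Rightarrow> (real \<Rightarrow> 'h \<Rightarrow>\<^sub>L 'h)
    \<Rightarrow> (real \<Rightarrow> 'h measure) \<Rightarrow> bool" where
  "evolution_system_of_measures \<Omega> L U f B \<nu> \<longleftrightarrow>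
     (\<forall>t. prob_space (\<nu> t) \<and> sets (\<nu> t) = sets borel)
   \<and> (\<forall>s t (\<phi>::'h \<Rightarrow> real). s < t \<longrightarrow> continuous_on UNIV \<phi> \<longrightarrow> bounded (range \<phi>) \<longrightarrow>
        (\<integral>x. trans_op \<Omega> L U f B s t \<phi> x \<partial>\<nu> s) = (\<integral>x. \<phi> x \<partial>\<nu> t))"

definition C1_fun :: "(real \<Rightarrow> 'a::real_normed_vector) \<Rightarrow> bool" where
  "C1_fun g \<longleftrightarrow> (\<exists>g'. continuous_on UNIV g' \<and> (\<forall>t. (g has_vector_derivative g' t) (at t)))"

definition periodic :: "real \<Rightarrow> (real \<Rightarrow> 'a) \<Rightarrow> bool" where
  "periodic T g \<longleftrightarrow> (\<forall>t. g (t + T) = g t)"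

text \<open>K: real parts of finite complex linear combinations of
  \<open>(t,x) \<mapsto> \<Phi>(t) e^{i<x,h(t)>}\<close>, with \<open>\<Phi>\<close>, h C^1 and T-periodic, h with values in D(A*).\<close>
definition in_K :: "real \<Rightarrow> 'h set \<Rightarrow> (real \<Rightarrow> 'h::real_inner \<Rightarrow> real) \<Rightarrow> bool" where
  "in_K T DAs u \<longleftrightarrow>
     (\<exists>(J::nat set) (c::nat \<Rightarrow> complex) (\<Phi>::nat \<Rightarrow> real \<Rightarrow> real) (h::nat \<Rightarrow> real \<Rightarrow> 'h).
        finite J
      \<and> (\<forall>j\<in>J. C1_fun (\<Phi> j) \<and> periodic T (\<Phi> j) \<and> C1_fun (h j) \<and> periodic T (h j)
               \<and> (\<forall>t. h j t \<in> DAs))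
      \<and> (\<forall>t x. u t x = Re (\<Sum>j\<in>J. c j * complex_of_real (\<Phi> j t) * cis (x \<bullet> h j t))))"

end

theory Submission
  imports Defs
begin


lemma test_fun_split:
  fixes S :: "'w \<Rightarrow> 'h::{real_normed_vector, second_countable_topology}"
  and \<phi> :: "'h \<Rightarrow> real"
  assumes P: "prob_space \<Omega>"
  and cont: "continuous_on UNIV \<phi>" and bd: "\<forall>z. 0 \<le> \<phi> z \<and> \<phi> z \<le> 1"
  and c: "(c::real) \<noteq> 0"
  shows "(\<integral>\<omega>. c + \<phi> (W y + S \<omega>) \<partial>\<Omega>) =
     (if integrable \<Omega> (\<lambda>\<omega>. \<phi> (W y + S \<omega>)) then c + (\<integral>\<omega>. \<phi> (W y + S \<omega>) \<partial>\<Omega>) else 0)"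
proof -
  interpret prob_space \<Omega> by fact
  show ?thesis
  proof (cases "integrable \<Omega> (\<lambda>\<omega>. \<phi> (W y + S \<omega>))")
    case True
    then show ?thesis by (simp add: prob_space)
  next
    case False
    have "\<not> integrable \<Omega> (\<lambda>\<omega>. c + \<phi> (W y + S \<omega>))"
    proof
      assume "integrable \<Omega> (\<lambda>\<omega>. c + \<phi> (W y + S \<omega>))"
      then have "integrable \<Omega> (\<lambda>\<omega>. (c + \<phi> (W y + S \<omega>)) - c)"
        by (intro Bochner_Integration.integrable_diff) auto
      moreover have "(\<lambda>\<omega>. (c + \<phi> (W y + S \<omega>)) - c) = (\<lambda>\<omega>. \<phi> (W y + S \<omega>))" by auto
      ultimately show False using False by simp
    qed
    then show ?thesis using False by (simp add: not_integrable_integral_eq)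
  qed
qed

lemma test_AE:
  fixes S :: "'w \<Rightarrow> 'h::{real_normed_vector, second_countable_topology}"
  and \<phi> :: "'h \<Rightarrow> real"
  assumes P: "prob_space \<Omega>" and Pm: "prob_space \<mu>" and sm: "sets \<mu> = sets borel"
  and Pn: "prob_space \<nu>" and sn: "sets \<nu> = sets borel"
  and H: "\<forall>\<phi>::'h\<Rightarrow>real. continuous_on UNIV \<phi> \<longrightarrow> bounded (range \<phi>) \<longrightarrow>
      (\<integral>y. (\<integral>\<omega>. \<phi> (W y + S \<omega>) \<partial>\<Omega>) \<partial>\<mu>) = (\<integral>z. \<phi> z \<partial>\<nu>)"
  and cont: "continuous_on UNIV \<phi>" and bd: "\<forall>z. 0 \<le> \<phi> z \<and> \<phi> z \<le> 1"
  shows "AE y in \<mu>. integrable \<Omega> (\<lambda>\<omega>. \<phi> (W y + S \<omega>))"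
proof -
  interpret Om: prob_space \<Omega> by fact
  interpret mu: prob_space \<mu> by fact
  interpret nu: prob_space \<nu> by fact
  define G where "G = {y. integrable \<Omega> (\<lambda>\<omega>. \<phi> (W y + S \<omega>))}"
  define a where "a = (\<integral>z. \<phi> z \<partial>\<nu>)"
  have a0: "0 \<le> a" unfolding a_def using bd by (simp add: integral_nonneg_AE)
  have phim: "\<phi> \<in> borel_measurable \<nu>"
    using borel_measurable_continuous_onI[OF cont] measurable_cong_sets[OF sn refl] by blast
  have phii: "integrable \<nu> \<phi>"
    by (rule nu.integrable_const_bound[where B=1]) (use bd phim in auto)
  have spm: "space \<mu> = UNIV" using sets_eq_imp_space_eq[OF sm] by simp
  have gc: "integrable \<mu> (\<lambda>y. \<integral>\<omega>. c + \<phi> (W y + S \<omega>) \<partial>\<Omega>) \<and>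
            (\<integral>y. (\<integral>\<omega>. c + \<phi> (W y + S \<omega>) \<partial>\<Omega>) \<partial>\<mu>) = c + a" if "c \<ge> 1" for c :: real
  proof -
    have hc: "(\<integral>y. (\<integral>\<omega>. c + \<phi> (W y + S \<omega>) \<partial>\<Omega>) \<partial>\<mu>) = (\<integral>z. c + \<phi> z \<partial>\<nu>)"
    proof -
      have "continuous_on UNIV (\<lambda>z. c + \<phi> z)" by (intro continuous_intros cont)
      moreover have "bounded (range (\<lambda>z. c + \<phi> z))"
      proof -
        have "\<bar>c + \<phi> z\<bar> \<le> \<bar>c\<bar> + 1" for z using bd[rule_format, of z] by arith
        then show ?thesis unfolding bounded_iff by auto
      qed
      ultimately show ?thesis using H by blast
    qed
    also have "\<dots> = c + a" using phii by (simp add: a_def nu.prob_space)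
    finally have e: "(\<integral>y. (\<integral>\<omega>. c + \<phi> (W y + S \<omega>) \<partial>\<Omega>) \<partial>\<mu>) = c + a" .
    have "integrable \<mu> (\<lambda>y. \<integral>\<omega>. c + \<phi> (W y + S \<omega>) \<partial>\<Omega>)"
      using e a0 that not_integrable_integral_eq by fastforce
    with e show ?thesis by simp
  qed
  have ind: "(\<lambda>y. (\<integral>\<omega>. 2 + \<phi> (W y + S \<omega>) \<partial>\<Omega>) - (\<integral>\<omega>. 1 + \<phi> (W y + S \<omega>) \<partial>\<Omega>)) = indicator G"
    by (rule ext) (simp add: test_fun_split[OF P cont bd] G_def indicator_def)
  have "integrable \<mu> (indicator G :: _ \<Rightarrow> real)"
    unfolding ind[symmetric] using gc[of 1] gc[of 2] by simp
  then have Gs: "G \<in> sets \<mu>" using integrable_indicator_iff[of \<mu> G] spm by simp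
  have "(\<integral>y. indicator G y \<partial>\<mu>) = (1::real)"
    unfolding ind[symmetric] using gc[of 1] gc[of 2] by simp
  then have "mu.prob G = 1" using Gs by simp
  then have "AE y in \<mu>. y \<in> G" using mu.AE_in_set_eq_1[OF Gs] by simp
  then show ?thesis by (simp add: G_def)
qed

lemma meas_from_esm:
  fixes S :: "'w \<Rightarrow> 'h::{real_normed_vector, second_countable_topology}"
  assumes P: "prob_space \<Omega>" and Pm: "prob_space \<mu>" and sm: "sets \<mu> = sets borel"
  and Pn: "prob_space \<nu>" and sn: "sets \<nu> = sets borel"
  and H: "\<forall>\<phi>::'h\<Rightarrow>real. continuous_on UNIV \<phi> \<longrightarrow> bounded (range \<phi>) \<longrightarrow>
      (\<integral>y. (\<integral>\<omega>. \<phi> (W y + S \<omega>) \<partial>\<Omega>) \<partial>\<mu>) = (\<integral>z. \<phi> z \<partial>\<nu>)"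
  shows "S \<in> borel_measurable \<Omega>"
proof -
  interpret mu: prob_space \<mu> by fact
  let ?B = "SOME B::'h set set. countable B \<and> topological_basis B"
  have cB: "countable ?B" and tB: "topological_basis ?B" by (auto intro!: countable_basis is_basis)
  define \<psi> where "\<psi> b z = min 1 (infdist z (- b))" for b :: "'h set" and z
  have psic: "continuous_on UNIV (\<psi> b)" for b unfolding \<psi>_def by (intro continuous_intros)
  have psib: "\<forall>z. 0 \<le> \<psi> b z \<and> \<psi> b z \<le> 1" for b unfolding \<psi>_def by (simp add: infdist_nonneg)
  have AEB: "AE y in \<mu>. \<forall>b\<in>?B. integrable \<Omega> (\<lambda>\<omega>. \<psi> b (W y + S \<omega>))"
    using cB by (subst AE_ball_countable) (auto intro!: test_AE[OF P Pm sm Pn sn H psic psib])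
  have "\<exists>y. \<forall>b\<in>?B. integrable \<Omega> (\<lambda>\<omega>. \<psi> b (W y + S \<omega>))"
  proof (rule ccontr)
    assume "\<nexists>y. \<forall>b\<in>?B. integrable \<Omega> (\<lambda>\<omega>. \<psi> b (W y + S \<omega>))"
    with AEB have "AE y in \<mu>. False" by (elim AE_mp) (auto intro!: AE_I2)
    then show False using mu.AE_False by simp
  qed
  then obtain y0 where y0: "\<And>b. b \<in> ?B \<Longrightarrow> (\<lambda>\<omega>. \<psi> b (W y0 + S \<omega>)) \<in> borel_measurable \<Omega>"
    by (auto dest: borel_measurable_integrable)
  have Z0: "(\<lambda>\<omega>. W y0 + S \<omega>) \<in> borel_measurable \<Omega>"
  proof (subst borel_eq_countable_basis[OF cB tB], rule measurable_measure_of)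
    fix b assume b: "b \<in> ?B"
    then have ob: "open b" by (rule topological_basis_open[OF tB])
    show "(\<lambda>\<omega>. W y0 + S \<omega>) -` b \<inter> space \<Omega> \<in> sets \<Omega>"
    proof (cases "b = UNIV")
      case True then show ?thesis by simp
    next
      case False
      then have ne: "- b \<noteq> {}" by auto
      have cl: "closure (- b) = - b" using ob by (simp add: closed_open)
      have "(\<lambda>\<omega>. W y0 + S \<omega>) -` b \<inter> space \<Omega> = {\<omega>\<in>space \<Omega>. \<psi> b (W y0 + S \<omega>) > 0}"
        using in_closure_iff_infdist_zero[OF ne] cl infdist_nonneg
        unfolding \<psi>_def by (auto simp: order_le_less) (metis less_irrefl)
      also have "\<dots> \<in> sets \<Omega>" using y0[OF b] by (rule borel_measurable_less[OF borel_measurable_const])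
      finally show ?thesis .
    qed
  qed auto
  have "(\<lambda>\<omega>. (W y0 + S \<omega>) - W y0) \<in> borel_measurable \<Omega>" using Z0 by measurable
  then show ?thesis by simp
qed

lemma main_est:
  fixes S :: "'w \<Rightarrow> 'h::{real_normed_vector, second_countable_topology}"
    and W :: "'h \<Rightarrow>\<^sub>L 'h" and \<phi> :: "'h \<Rightarrow> real"
  assumes P: "prob_space \<Omega>" and Sm: "S \<in> borel_measurable \<Omega>"
  and Pm: "prob_space \<mu>" and sm: "sets \<mu> = sets borel"
  and cont: "continuous_on UNIV \<phi>"
  and Lip: "\<forall>z z'. \<bar>\<phi> z - \<phi> z'\<bar> \<le> K * norm (z - z')" and K: "0 \<le> K"
  and bd: "\<forall>z. \<bar>\<phi> z\<bar> \<le> Bd"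
  and nW: "norm W \<le> e" and intn: "integrable \<mu> norm" and M: "(\<integral>y. norm y \<partial>\<mu>) \<le> M"
  shows "\<bar>(\<integral>\<omega>. \<phi> (W x + S \<omega>) \<partial>\<Omega>) - (\<integral>y. (\<integral>\<omega>. \<phi> (W y + S \<omega>) \<partial>\<Omega>) \<partial>\<mu>)\<bar>
         \<le> K * e * (norm x + M)"
proof -
  interpret Om: prob_space \<Omega> by fact
  interpret mu: prob_space \<mu> by fact
  define g where "g y = (\<integral>\<omega>. \<phi> (W y + S \<omega>) \<partial>\<Omega>)" for y
  have e0: "0 \<le> e" using nW norm_ge_zero order_trans by blast
  have hint: "integrable \<Omega> (\<lambda>\<omega>. \<phi> (W y + S \<omega>))" for y
  proof (rule Om.integrable_const_bound[where B=Bd])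
    have "(\<lambda>\<omega>. W y + S \<omega>) \<in> borel_measurable \<Omega>" using Sm by measurable
    then show "(\<lambda>\<omega>. \<phi> (W y + S \<omega>)) \<in> borel_measurable \<Omega>" by (rule borel_measurable_continuous_on[OF cont])
  qed (use bd in auto)
  have gdiff: "\<bar>g y - g y'\<bar> \<le> K * e * norm (y - y')" for y y'
  proof -
    have "\<bar>g y - g y'\<bar> = \<bar>\<integral>\<omega>. \<phi> (W y + S \<omega>) - \<phi> (W y' + S \<omega>) \<partial>\<Omega>\<bar>"
      unfolding g_def using hint by simp
    also have "\<dots> \<le> (\<integral>\<omega>. norm (\<phi> (W y + S \<omega>) - \<phi> (W y' + S \<omega>)) \<partial>\<Omega>)"
      using integral_norm_bound[of \<Omega> "\<lambda>\<omega>. \<phi> (W y + S \<omega>) - \<phi> (W y' + S \<omega>)"] by (simp only: real_norm_def)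
    also have "\<dots> \<le> (\<integral>\<omega>. K * e * norm (y - y') \<partial>\<Omega>)"
    proof (rule integral_mono)
      show "integrable \<Omega> (\<lambda>\<omega>. norm (\<phi> (W y + S \<omega>) - \<phi> (W y' + S \<omega>)))" using hint by auto
      show "integrable \<Omega> (\<lambda>\<omega>. K * e * norm (y - y'))" by simp
      fix \<omega>
      have "norm (\<phi> (W y + S \<omega>) - \<phi> (W y' + S \<omega>)) \<le> K * norm (W y - W y')"
        using Lip[rule_format, of "W y + S \<omega>" "W y' + S \<omega>"] by simp
      also have "\<dots> = K * norm (W (y - y'))" by (simp add: blinfun.diff_right)
      also have "\<dots> \<le> K * (e * norm (y - y'))"
        using K nW norm_blinfun[of W "y - y'"]
        by (intro mult_left_mono) (auto intro: order_trans[OF _ mult_right_mono[OF nW norm_ge_zero]])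
      finally show "norm (\<phi> (W y + S \<omega>) - \<phi> (W y' + S \<omega>)) \<le> K * e * norm (y - y')"
        by (simp add: mult.assoc)
    qed
    also have "\<dots> = K * e * norm (y - y')" by (simp add: Om.prob_space)
    finally show ?thesis .
  qed
  have "(K * e)-lipschitz_on UNIV g"
    by (rule lipschitz_onI) (use gdiff K e0 in \<open>auto simp: dist_norm\<close>)
  then have gc: "continuous_on UNIV g" by (rule lipschitz_on_continuous_on)
  have gm: "g \<in> borel_measurable \<mu>"
    using borel_measurable_continuous_onI[OF gc] measurable_cong_sets[OF sm refl] by blast
  have gb: "\<bar>g y\<bar> \<le> Bd" for y
  proof -
    have "\<bar>g y\<bar> \<le> (\<integral>\<omega>. norm (\<phi> (W y + S \<omega>)) \<partial>\<Omega>)"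
      unfolding g_def using integral_norm_bound[of \<Omega> "\<lambda>\<omega>. \<phi> (W y + S \<omega>)"] by (simp only: real_norm_def)
    also have "\<dots> \<le> (\<integral>\<omega>. Bd \<partial>\<Omega>)"
      by (rule integral_mono) (use hint bd in auto)
    finally show ?thesis by (simp add: Om.prob_space)
  qed
  have gi: "integrable \<mu> g" by (rule mu.integrable_const_bound[where B=Bd]) (use gb gm in auto)
  have "\<bar>g x - (\<integral>y. g y \<partial>\<mu>)\<bar> = \<bar>\<integral>y. g x - g y \<partial>\<mu>\<bar>"
    using gi by (simp add: mu.prob_space)
  also have "\<dots> \<le> (\<integral>y. norm (g x - g y) \<partial>\<mu>)"
    using integral_norm_bound[of \<mu> "\<lambda>y. g x - g y"] by (simp only: real_norm_def)
  also have "\<dots> \<le> (\<integral>y. K * e * norm x + K * e * norm y \<partial>\<mu>)"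
  proof (rule integral_mono)
    show "integrable \<mu> (\<lambda>y. norm (g x - g y))" using gi by auto
    show "integrable \<mu> (\<lambda>y. K * e * norm x + K * e * norm y)" using intn by auto
    fix y
    have "norm (g x - g y) \<le> K * e * norm (x - y)" using gdiff by simp
    also have "\<dots> \<le> K * e * (norm x + norm y)"
      using K e0 norm_triangle_ineq4[of x y] by (intro mult_left_mono) auto
    finally show "norm (g x - g y) \<le> K * e * norm x + K * e * norm y" by (simp add: algebra_simps)
  qed
  also have "\<dots> = K * e * norm x + K * e * (\<integral>y. norm y \<partial>\<mu>)"
    using intn by (simp add: mu.prob_space)
  also have "\<dots> \<le> K * e * (norm x + M)"
    using mult_left_mono[OF M mult_nonneg_nonneg[OF K e0]] by (simp add: algebra_simps)
  finally show ?thesis unfolding g_def .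
qed



lemma sin_lip: "\<bar>sin (a::real) - sin b\<bar> \<le> \<bar>a - b\<bar>"
proof -
  have "\<bar>sin a - sin b\<bar> = 2 * \<bar>sin ((a - b) / 2)\<bar> * \<bar>cos ((a + b) / 2)\<bar>"
    by (simp add: sin_diff_sin abs_mult)
  also have "\<dots> \<le> 2 * \<bar>(a - b) / 2\<bar> * 1"
    by (rule mult_mono[OF mult_left_mono[OF abs_sin_x_le_abs_x]]) auto
  also have "\<dots> = \<bar>a - b\<bar>" by simp
  finally show ?thesis .
qed

lemma cos_lip: "\<bar>cos (a::real) - cos b\<bar> \<le> \<bar>a - b\<bar>"
proof -
  have "\<bar>cos a - cos b\<bar> = 2 * \<bar>sin ((a + b) / 2)\<bar> * \<bar>sin ((b - a) / 2)\<bar>"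
    by (simp add: cos_diff_cos abs_mult)
  also have "\<dots> \<le> 2 * 1 * \<bar>(b - a) / 2\<bar>"
    by (rule mult_mono[OF mult_left_mono abs_sin_x_le_abs_x]) auto
  also have "\<dots> = \<bar>a - b\<bar>" by simp
  finally show ?thesis .
qed

lemma cis_lip: "norm (cis a - cis b) \<le> 2 * \<bar>a - b\<bar>"
proof -
  have "norm (cis a - cis b) \<le> \<bar>Re (cis a - cis b)\<bar> + \<bar>Im (cis a - cis b)\<bar>" by (rule cmod_le)
  also have "\<dots> = \<bar>cos a - cos b\<bar> + \<bar>sin a - sin b\<bar>" by simp
  also have "\<dots> \<le> 2 * \<bar>a - b\<bar>" using sin_lip[of a b] cos_lip[of a b] by simp
  finally show ?thesis .
qed

lemma periodic_int:
  assumes "periodic T g" shows "g (x + real_of_int k * T) = g x"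
proof -
  have n: "g (y + real n * T) = g y" for y n
  proof (induction n)
    case (Suc n)
    have "g (y + real (Suc n) * T) = g ((y + real n * T) + T)" by (simp add: algebra_simps)
    also have "\<dots> = g (y + real n * T)" using assms by (simp add: periodic_def)
    finally show ?case using Suc by simp
  qed simp
  show ?thesis
  proof (cases "k \<ge> 0")
    case True
    then show ?thesis using n[of x "nat k"] by simp
  next
    case False
    have "g (x + real_of_int k * T) = g ((x + real_of_int k * T) + real (nat (- k)) * T)"
      using n by simp
    also have "(x + real_of_int k * T) + real (nat (- k)) * T = x" using False by simp
    finally show ?thesis .
  qed
qed

lemma periodic_bounded:
  fixes g :: "real \<Rightarrow> 'a::real_normed_vector"
  assumes T: "T > 0" and c: "continuous_on UNIV g" and p: "periodic T g"
  shows "\<exists>B. \<forall>t. norm (g t) \<le> B"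
proof -
  have "compact (g ` {0..T})"
    by (rule compact_continuous_image) (use c continuous_on_subset in auto)
  then obtain B where B: "\<And>y. y \<in> g ` {0..T} \<Longrightarrow> norm y \<le> B"
    using compact_imp_bounded bounded_iff by metis
  have "norm (g t) \<le> B" for t
  proof -
    define k where "k = \<lfloor>t / T\<rfloor>"
    define r where "r = t - real_of_int k * T"
    have "real_of_int k \<le> t / T" "t / T < real_of_int k + 1" unfolding k_def by linarith+
    then have "real_of_int k * T \<le> t" "t < (real_of_int k + 1) * T"
      using T by (auto simp: field_simps)
    then have "r \<in> {0..T}" unfolding r_def by (auto simp: algebra_simps)
    moreover have "g t = g r"
      using periodic_int[OF p, of r k] unfolding r_def by simp
    ultimately show ?thesis using B by auto
  qed
  then show ?thesis by blast
qed

lemma C1_cont: "C1_fun g \<Longrightarrow> continuous_on UNIV g"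
  unfolding C1_fun_def
  by (metis continuous_at_imp_continuous_on has_vector_derivative_continuous)

lemma K_props:
  fixes u :: "real \<Rightarrow> 'h::real_inner \<Rightarrow> real"
  assumes T: "T > 0" and uK: "in_K T DAs u"
  shows "\<exists>K Bd. 0 \<le> K \<and> (\<forall>t z z'. \<bar>u t z - u t z'\<bar> \<le> K * norm (z - z')) \<and> (\<forall>t z. \<bar>u t z\<bar> \<le> Bd)"
proof -
  from uK[unfolded in_K_def] obtain J and c :: "nat \<Rightarrow> complex" and \<Phi> :: "nat \<Rightarrow> real \<Rightarrow> real"
     and h :: "nat \<Rightarrow> real \<Rightarrow> 'h" where J: "finite J"
    and jp0: "\<forall>j\<in>J. C1_fun (\<Phi> j) \<and> periodic T (\<Phi> j) \<and> C1_fun (h j) \<and> periodic T (h j)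
               \<and> (\<forall>t. h j t \<in> DAs)"
    and ueq0: "\<forall>t x. u t x = Re (\<Sum>j\<in>J. c j * complex_of_real (\<Phi> j t) * cis (x \<bullet> h j t))"
    by blast
  have jp: "C1_fun (\<Phi> j) \<and> periodic T (\<Phi> j) \<and> C1_fun (h j) \<and> periodic T (h j)" if "j \<in> J" for j
    using jp0 that by blast
  have ueq: "u t x = Re (\<Sum>j\<in>J. c j * complex_of_real (\<Phi> j t) * cis (x \<bullet> h j t))" for t x
    using ueq0 by blast
  define PB where "PB j = (SOME B. \<forall>t. norm (\<Phi> j t) \<le> B)" for j
  define HB where "HB j = (SOME B. \<forall>t. norm (h j t) \<le> B)" for j
  have PB: "\<bar>\<Phi> j t\<bar> \<le> \<bar>PB j\<bar>" if "j \<in> J" for j t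
  proof -
    have "\<exists>B. \<forall>t. norm (\<Phi> j t) \<le> B"
      using periodic_bounded[OF T C1_cont] jp[OF that] by blast
    then have "\<forall>t. norm (\<Phi> j t) \<le> PB j" unfolding PB_def by (rule someI_ex)
    then have "norm (\<Phi> j t) \<le> PB j" by blast
    then show ?thesis using abs_ge_self[of "PB j"] by simp
  qed
  have HB: "norm (h j t) \<le> \<bar>HB j\<bar>" if "j \<in> J" for j t
  proof -
    have "\<exists>B. \<forall>t. norm (h j t) \<le> B"
      using periodic_bounded[OF T C1_cont] jp[OF that] by blast
    then have "\<forall>t. norm (h j t) \<le> HB j" unfolding HB_def by (rule someI_ex)
    then have "norm (h j t) \<le> HB j" by blast
    then show ?thesis using abs_ge_self[of "HB j"] by linarith
  qed
  define K where "K = (\<Sum>j\<in>J. cmod (c j) * \<bar>PB j\<bar> * (2 * \<bar>HB j\<bar>))"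
  define Bd where "Bd = (\<Sum>j\<in>J. cmod (c j) * \<bar>PB j\<bar>)"
  have K0: "0 \<le> K" unfolding K_def by (intro sum_nonneg) auto
  have lip: "\<bar>u t z - u t z'\<bar> \<le> K * norm (z - z')" for t z z'
  proof -
    have "\<bar>u t z - u t z'\<bar> = \<bar>Re ((\<Sum>j\<in>J. c j * complex_of_real (\<Phi> j t) * cis (z \<bullet> h j t))
         - (\<Sum>j\<in>J. c j * complex_of_real (\<Phi> j t) * cis (z' \<bullet> h j t)))\<bar>"
      unfolding ueq by simp
    also have "\<dots> \<le> norm ((\<Sum>j\<in>J. c j * complex_of_real (\<Phi> j t) * cis (z \<bullet> h j t))
         - (\<Sum>j\<in>J. c j * complex_of_real (\<Phi> j t) * cis (z' \<bullet> h j t)))" by (rule abs_Re_le_cmod)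
    also have "\<dots> = norm (\<Sum>j\<in>J. c j * complex_of_real (\<Phi> j t) * (cis (z \<bullet> h j t) - cis (z' \<bullet> h j t)))"
      by (simp only: sum_subtractf[symmetric] right_diff_distrib)
    also have "\<dots> \<le> (\<Sum>j\<in>J. norm (c j * complex_of_real (\<Phi> j t) * (cis (z \<bullet> h j t) - cis (z' \<bullet> h j t))))"
      by (rule norm_sum)
    also have "\<dots> \<le> (\<Sum>j\<in>J. cmod (c j) * \<bar>PB j\<bar> * (2 * \<bar>HB j\<bar>) * norm (z - z'))"
    proof (rule sum_mono)
      fix j assume j: "j \<in> J"
      have "\<bar>z \<bullet> h j t - z' \<bullet> h j t\<bar> = \<bar>(z - z') \<bullet> h j t\<bar>" by (simp add: inner_diff_left)
      also have "\<dots> \<le> norm (z - z') * norm (h j t)" by (rule Cauchy_Schwarz_ineq2)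
      also have "\<dots> \<le> norm (z - z') * \<bar>HB j\<bar>" by (rule mult_left_mono[OF HB[OF j]]) simp
      finally have i: "\<bar>z \<bullet> h j t - z' \<bullet> h j t\<bar> \<le> norm (z - z') * \<bar>HB j\<bar>" .
      have ci: "norm (cis (z \<bullet> h j t) - cis (z' \<bullet> h j t)) \<le> 2 * (norm (z - z') * \<bar>HB j\<bar>)"
        using order_trans[OF cis_lip[of "z \<bullet> h j t" "z' \<bullet> h j t"] mult_left_mono[OF i]] by simp
      have "norm (c j * complex_of_real (\<Phi> j t) * (cis (z \<bullet> h j t) - cis (z' \<bullet> h j t)))
          = cmod (c j) * \<bar>\<Phi> j t\<bar> * norm (cis (z \<bullet> h j t) - cis (z' \<bullet> h j t))"
        by (simp add: norm_mult)
      also have "\<dots> \<le> cmod (c j) * \<bar>PB j\<bar> * (2 * (norm (z - z') * \<bar>HB j\<bar>))"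
        by (intro mult_mono mult_left_mono PB[OF j] ci) auto
      finally show "norm (c j * complex_of_real (\<Phi> j t) * (cis (z \<bullet> h j t) - cis (z' \<bullet> h j t)))
          \<le> cmod (c j) * \<bar>PB j\<bar> * (2 * \<bar>HB j\<bar>) * norm (z - z')" by (simp add: algebra_simps)
    qed
    also have "\<dots> = K * norm (z - z')" unfolding K_def by (simp add: sum_distrib_right)
    finally show ?thesis .
  qed
  have bd: "\<bar>u t z\<bar> \<le> Bd" for t z
  proof -
    have "\<bar>u t z\<bar> \<le> norm (\<Sum>j\<in>J. c j * complex_of_real (\<Phi> j t) * cis (z \<bullet> h j t))"
      unfolding ueq by (rule abs_Re_le_cmod)
    also have "\<dots> \<le> (\<Sum>j\<in>J. norm (c j * complex_of_real (\<Phi> j t) * cis (z \<bullet> h j t)))" by (rule norm_sum)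
    also have "\<dots> \<le> Bd" unfolding Bd_def
    proof (rule sum_mono)
      fix j assume j: "j \<in> J"
      show "norm (c j * complex_of_real (\<Phi> j t) * cis (z \<bullet> h j t)) \<le> cmod (c j) * \<bar>PB j\<bar>"
        using PB[OF j, of t] by (simp add: norm_mult mult_left_mono)
    qed
    finally show ?thesis .
  qed
  show ?thesis using K0 lip bd by blast
qed


lemma moment_bound:
  fixes \<nu> :: "real \<Rightarrow> 'h::{real_normed_vector, second_countable_topology} measure"
  assumes sb: "\<And>t. sets (\<nu> t) = sets borel"
    and m: "(SUP t. \<integral>\<^sup>+y. ennreal (norm y) \<partial>\<nu> t) < \<infinity>"
  shows "\<exists>M. \<forall>t. integrable (\<nu> t) norm \<and> (\<integral>y. norm y \<partial>\<nu> t) \<le> M"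
proof -
  define S where "S = (SUP t. \<integral>\<^sup>+y. ennreal (norm y) \<partial>\<nu> t)"
  have "integrable (\<nu> t) norm \<and> (\<integral>y. norm y \<partial>\<nu> t) \<le> enn2real S" for t
  proof -
    have le: "(\<integral>\<^sup>+y. ennreal (norm y) \<partial>\<nu> t) \<le> S" unfolding S_def by (rule SUP_upper) simp
    have nm: "norm \<in> borel_measurable (\<nu> t)"
      by (subst measurable_cong_sets[OF sb refl]) simp
    have i: "integrable (\<nu> t) norm"
      by (rule integrableI_bounded) (use nm le m S_def in auto)
    have "ennreal (\<integral>y. norm y \<partial>\<nu> t) = (\<integral>\<^sup>+y. ennreal (norm y) \<partial>\<nu> t)"
      by (rule nn_integral_eq_integral[symmetric]) (use i in auto)
    then have le2: "ennreal (\<integral>y. norm y \<partial>\<nu> t) \<le> S" using le by simp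
    then have "(\<integral>y. norm y \<partial>\<nu> t) \<le> enn2real S"
    proof -
      have "S < \<infinity>" using m S_def by simp
      then have "enn2real (ennreal (\<integral>y. norm y \<partial>\<nu> t)) \<le> enn2real S"
        using enn2real_mono[OF le2] by simp
      then show ?thesis by simp
    qed
    with i show ?thesis by simp
  qed
  then show ?thesis by blast
qed

lemma OU_eq: "OU_proc \<Omega> L U f B t s y \<omega> = U t s y +
   (integral {s..t} (\<lambda>r. U t r (f r)) + stoch_int \<Omega> L (\<lambda>r. U t r o\<^sub>L B r) s t \<omega>)"
  by (simp add: OU_proc_def add.assoc)

theorem mainTheorem15:
  fixes \<Omega> :: "'w measure"
    and L :: "real \<Rightarrow> 'w \<Rightarrow> 'h::{real_inner, complete_space, second_countable_topology}"
    and T c \<omega> :: real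
    and f :: "real \<Rightarrow> 'h"
    and B :: "real \<Rightarrow> 'h \<Rightarrow>\<^sub>L 'h"
    and DA :: "'h set" and A :: "real \<Rightarrow> 'h \<Rightarrow> 'h"
    and DAs :: "'h set" and As :: "real \<Rightarrow> 'h \<Rightarrow> 'h"
    and U :: "real \<Rightarrow> real \<Rightarrow> 'h \<Rightarrow>\<^sub>L 'h"
    and \<nu> :: "real \<Rightarrow> 'h measure"
    and u :: "real \<Rightarrow> 'h \<Rightarrow> real"
    and x :: 'h
  assumes T_pos: "T > 0"
    and levy: "levy_process \<Omega> L"
    and levy_moment: "(\<integral>\<^sup>+y\<in>{y. norm y > 1}. ennreal (norm y) \<partial>levy_measure \<Omega> L) < \<infinity>"
    and f_cont: "continuous_on UNIV f" and f_per: "periodic T f"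
    and B_strong: "\<forall>y. continuous_on UNIV (\<lambda>t. B t y)"
    and B_bdd: "\<exists>C. \<forall>t. norm (B t) \<le> C"
    and B_per: "periodic T B"
    and A_per: "periodic T A"
    and DA_dense: "closure DA = UNIV"
    and U_id: "\<forall>t. U t t = id_blinfun"
    and U_comp: "\<forall>s r t. s \<le> r \<longrightarrow> r \<le> t \<longrightarrow> U t r o\<^sub>L U r s = U t s"
    and U_strong: "\<forall>y. continuous_on {(t, s). s \<le> t} (\<lambda>(t, s). U t s y)"
    and U_gen: "\<forall>s t y. s \<le> t \<longrightarrow> y \<in> DA \<longrightarrow> U t s y \<in> DA \<and>
                  ((\<lambda>r. U r s y) has_vector_derivative A t (U t s y)) (at t within {s..})"
    and U_per: "\<forall>t s. U (t + T) (s + T) = U t s"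
    and U_exp: "c > 0" "\<omega> > 0" "\<forall>s t. s \<le> t \<longrightarrow> norm (U t s) \<le> c * exp (- \<omega> * (t - s))"
    and As_adj: "\<forall>t. \<forall>y\<in>DAs. \<forall>z\<in>DA. A t z \<bullet> y = z \<bullet> As t y"
    and DAs_def: "\<forall>t. DAs = {y. \<exists>w. \<forall>z\<in>DA. A t z \<bullet> y = z \<bullet> w}"
    and DAs_dense: "closure DAs = UNIV"
    and U_adj_inv: "\<forall>s t. s \<le> t \<longrightarrow> adjoint (blinfun_apply (U t s)) ` DAs \<subseteq> DAs"
    and U_adj_deriv: "\<forall>s t y. s \<le> t \<longrightarrow> y \<in> DAs \<longrightarrow>
        ((\<lambda>r. adjoint (blinfun_apply (U r s)) y) has_vector_derivative
            adjoint (blinfun_apply (U t s)) (As t y)) (at t within {s..})"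
    and esm: "evolution_system_of_measures \<Omega> L U f B \<nu>"
    and \<nu>_per: "periodic T \<nu>"
    and moment: "(SUP t. \<integral>\<^sup>+y. ennreal (norm y) \<partial>\<nu> t) < \<infinity>"
    and uK: "in_K T DAs u"
  shows "((\<lambda>\<tau>. SUP t. \<bar>P_tau \<Omega> L U f B \<tau> u t x - (\<integral>y. u (t + \<tau>) y \<partial>\<nu> (t + \<tau>))\<bar>) \<longlongrightarrow> 0) at_top"
  proof -
  have PO: "prob_space \<Omega>" using levy unfolding levy_process_def by blast
  have nuP: "prob_space (\<nu> t)" and nus: "sets (\<nu> t) = sets borel" for t
    using esm unfolding evolution_system_of_measures_def by blast+
  have esmE: "(\<integral>y. trans_op \<Omega> L U f B s t \<phi> y \<partial>\<nu> s) = (\<integral>y. \<phi> y \<partial>\<nu> t)"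
    if "s < t" "continuous_on UNIV \<phi>" "bounded (range \<phi>)" for s t and \<phi> :: "'h \<Rightarrow> real"
    using esm that unfolding evolution_system_of_measures_def by blast
  obtain M where Mi: "\<And>t. integrable (\<nu> t) norm" and Mb: "\<And>t. (\<integral>y. norm y \<partial>\<nu> t) \<le> M"
    using moment_bound[OF nus moment] by blast
  obtain K Bd where K0: "0 \<le> K" and Klip: "\<And>t z z'. \<bar>u t z - u t z'\<bar> \<le> K * norm (z - z')"
    and ubd: "\<And>t z. \<bar>u t z\<bar> \<le> Bd"
    using K_props[OF T_pos uK] by blast
  have ucont: "continuous_on UNIV (u t)" for t
  proof -
    have "K-lipschitz_on UNIV (u t)"
      by (rule lipschitz_onI) (use Klip K0 in \<open>auto simp: dist_norm\<close>)
    then show ?thesis by (rule lipschitz_on_continuous_on)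
  qed
  have ubnd: "bounded (range (u t))" for t
    unfolding bounded_iff using ubd by auto
  define bnd where "bnd \<tau> = K * (c * exp (- \<omega> * \<tau>)) * (norm x + M)" for \<tau>
  have key: "\<bar>P_tau \<Omega> L U f B \<tau> u t x - (\<integral>y. u (t + \<tau>) y \<partial>\<nu> (t + \<tau>))\<bar> \<le> bnd \<tau>"
    if tau: "\<tau> > 0" for \<tau> t
  proof -
    define W where "W = U (t + \<tau>) t"
    define S where "S \<omega>' = integral {t..t + \<tau>} (\<lambda>r. U (t + \<tau>) r (f r))
        + stoch_int \<Omega> L (\<lambda>r. U (t + \<tau>) r o\<^sub>L B r) t (t + \<tau>) \<omega>'" for \<omega>'
    have tr: "trans_op \<Omega> L U f B t (t + \<tau>) \<phi> y = (\<integral>\<omega>'. \<phi> (W y + S \<omega>') \<partial>\<Omega>)" for \<phi> y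
      unfolding trans_op_def OU_eq W_def S_def ..
    have lt: "t < t + \<tau>" using tau by simp
    have H: "\<forall>\<phi>::'h\<Rightarrow>real. continuous_on UNIV \<phi> \<longrightarrow> bounded (range \<phi>) \<longrightarrow>
      (\<integral>y. (\<integral>\<omega>'. \<phi> (blinfun_apply W y + S \<omega>') \<partial>\<Omega>) \<partial>\<nu> t) = (\<integral>z. \<phi> z \<partial>\<nu> (t + \<tau>))"
      using esmE[OF lt] unfolding tr by blast
    have Sm: "S \<in> borel_measurable \<Omega>"
      by (rule meas_from_esm[OF PO nuP nus nuP nus H])
    have nW: "norm W \<le> c * exp (- \<omega> * \<tau>)"
    proof -
      have "norm (U (t + \<tau>) t) \<le> c * exp (- \<omega> * ((t + \<tau>) - t))"
        using U_exp(3)[rule_format, of t "t + \<tau>"] lt by simp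
      then show ?thesis unfolding W_def by simp
    qed
    have "\<bar>(\<integral>\<omega>'. u (t + \<tau>) (W x + S \<omega>') \<partial>\<Omega>) - (\<integral>y. (\<integral>\<omega>'. u (t + \<tau>) (W y + S \<omega>') \<partial>\<Omega>) \<partial>\<nu> t)\<bar>
         \<le> K * (c * exp (- \<omega> * \<tau>)) * (norm x + M)"
      by (rule main_est[where Bd=Bd, OF PO Sm nuP nus ucont _ K0 _ nW Mi Mb]) (simp_all add: Klip ubd)
    moreover have "(\<integral>y. (\<integral>\<omega>'. u (t + \<tau>) (W y + S \<omega>') \<partial>\<Omega>) \<partial>\<nu> t) = (\<integral>y. u (t + \<tau>) y \<partial>\<nu> (t + \<tau>))"
      using H ucont ubnd by blast
    moreover have "P_tau \<Omega> L U f B \<tau> u t x = (\<integral>\<omega>'. u (t + \<tau>) (W x + S \<omega>') \<partial>\<Omega>)"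
      unfolding P_tau_def tr ..
    ultimately show ?thesis unfolding bnd_def by simp
  qed
  have sup_le: "0 \<le> (SUP t. \<bar>P_tau \<Omega> L U f B \<tau> u t x - (\<integral>y. u (t + \<tau>) y \<partial>\<nu> (t + \<tau>))\<bar>)
       \<and> (SUP t. \<bar>P_tau \<Omega> L U f B \<tau> u t x - (\<integral>y. u (t + \<tau>) y \<partial>\<nu> (t + \<tau>))\<bar>) \<le> bnd \<tau>"
    if "\<tau> > 0" for \<tau>
  proof
    have bdd: "bdd_above (range (\<lambda>t. \<bar>P_tau \<Omega> L U f B \<tau> u t x - (\<integral>y. u (t + \<tau>) y \<partial>\<nu> (t + \<tau>))\<bar>))"
      using key[OF that] by (intro bdd_aboveI2) auto
    show "0 \<le> (SUP t. \<bar>P_tau \<Omega> L U f B \<tau> u t x - (\<integral>y. u (t + \<tau>) y \<partial>\<nu> (t + \<tau>))\<bar>)"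
      using cSUP_upper[OF UNIV_I bdd, of 0] by (meson abs_ge_zero order_trans)
    show "(SUP t. \<bar>P_tau \<Omega> L U f B \<tau> u t x - (\<integral>y. u (t + \<tau>) y \<partial>\<nu> (t + \<tau>))\<bar>) \<le> bnd \<tau>"
      by (rule cSUP_least) (use key[OF that] in auto)
  qed
  have ex: "((\<lambda>\<tau>. exp (- \<omega> * \<tau>)) \<longlongrightarrow> 0) at_top"
  proof -
    have "LIM \<tau> at_top. (- \<omega>) * \<tau> :> at_bot"
      by (rule filterlim_tendsto_neg_mult_at_bot[OF tendsto_const _ filterlim_ident]) (use U_exp(2) in simp)
    then show ?thesis by (rule filterlim_compose[OF exp_at_bot])
  qed
  have "(bnd \<longlongrightarrow> K * (c * 0) * (norm x + M)) at_top"
    unfolding bnd_def by (intro tendsto_intros ex)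
  then have bl: "(bnd \<longlongrightarrow> 0) at_top" by simp
  have ev: "eventually (\<lambda>\<tau>::real. \<tau> > 0) at_top" using eventually_gt_at_top[of "0::real"] by simp
  define F where "F \<tau> = (SUP t. \<bar>P_tau \<Omega> L U f B \<tau> u t x - (\<integral>y. u (t + \<tau>) y \<partial>\<nu> (t + \<tau>))\<bar>)" for \<tau>
  have e1: "eventually (\<lambda>\<tau>. 0 \<le> F \<tau>) at_top"
    using ev by (rule eventually_mono) (use sup_le in \<open>simp add: F_def\<close>)
  have e2: "eventually (\<lambda>\<tau>. F \<tau> \<le> bnd \<tau>) at_top"
    using ev by (rule eventually_mono) (use sup_le in \<open>simp add: F_def\<close>)
  have "(F \<longlongrightarrow> 0) at_top"
    by (rule tendsto_sandwich[OF e1 e2 tendsto_const bl])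
  then show ?thesis unfolding F_def .
qed

end
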